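(* Let $d\ge0$, and consider the Gaussian broadcast model on $P=\mathbb Z_{\ge0}^{d+1}$ in the critical case $\alpha_i=1/i$ for all $i\in[d+1]$. Fix $t\ge0$ and reals $c_u\ge0$ ($u\in L_t$) with $\sum_{u\in L_t}c_u=1$, and let $\zeta=\sum_{u\in L_t}c_uX_u$. Let $\Gamma$ be the random chain that starts at $u\in L_t$ with probability $c_u$ and, at each step, moves from its current vertex $x\ne\mathbf 0$ to an element of $\mathfrak p(x)$ chosen uniformly at random (independently of previous steps), stopping when it reaches $\mathbf 0$. For $w\in P$ write $\mathbb P(w\in\Gamma)$ for the probability that $\Gamma$ visits $w$. Then $$\operatorname{Var}(\zeta)\ge\frac1{d+1}\sum_{w\in P}\mathbb P(w\in\Gamma)^2.$$
   Context: Gaussian broadcast model on the finite model: $P=\mathbb{Z}_{\ge0}^{d+1}$ with $u\le v$ iff $v-u\in\mathbb{Z}_{\ge0}^{d+1}$; $L_t$ = tuples with coordinate sum $t$; $\mathfrak p(v)$ = set of elements covered by $v$ (the vectors $v-e_i$ with $v_i>0$), so $|\mathfrak p(v)|$ is the number of positive coordinates; $\mathbf 0$ is the minimal element. Let $X_0\sim\mathcal N(0,1)$, independently i.i.d. $W_{u\to v}\sim\mathcal N(0,1)$ for covering pairs $u\lessdot v$, $X_{\mathbf 0}=X_0$, and $X_v=\alpha_{|\mathfrak p(v)|}\sum_{u\in\mathfrak p(v)}(X_u+W_{u\to v})$ for $v\ne\mathbf 0$. *)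

theory Defs
  imports "HOL-Probability.Probability"
begin

type_synonym pt = "nat \<Rightarrow> nat"

text \<open>The poset P = Z_{>=0}^{d+1}: coordinates indexed by 0..d, zero elsewhere.\<close>
definition Pset :: "nat \<Rightarrow> pt set" where
  "Pset d = {v. \<forall>i>d. v i = 0}"

definition Lev :: "nat \<Rightarrow> nat \<Rightarrow> pt set" where
  "Lev d t = {v \<in> Pset d. (\<Sum>i\<le>d. v i) = t}"

definition preds :: "nat \<Rightarrow> pt \<Rightarrow> pt set" where
  "preds d v = {v(i := v i - 1) | i. i \<le> d \<and> 0 < v i}"

text \<open>Downward random walk: from x (not 0) move to a uniformly random element of preds x;
  stop at 0. The first argument is step budget (fuel); it records the visited path.\<close>
primrec walk :: "nat \<Rightarrow> nat \<Rightarrow> pt \<Rightarrow> pt list pmf" where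
  "walk d 0 x = return_pmf [x]"
| "walk d (Suc n) x =
     (if x = (\<lambda>_. 0) then return_pmf [x]
      else pmf_of_set (preds d x) \<bind> (\<lambda>y. map_pmf (\<lambda>p. x # p) (walk d n y)))"

text \<open>The random chain Gamma: start at u in L_t with probability c u, then walk down
  (reaching 0 after exactly t steps).\<close>
definition Gamma :: "nat \<Rightarrow> nat \<Rightarrow> (pt \<Rightarrow> real) \<Rightarrow> pt list pmf" where
  "Gamma d t c = embed_pmf (\<lambda>u. if u \<in> Lev d t then c u else 0) \<bind> (\<lambda>u. walk d t u)"

definition visit_prob :: "nat \<Rightarrow> nat \<Rightarrow> (pt \<Rightarrow> real) \<Rightarrow> pt \<Rightarrow> real" where
  "visit_prob d t c w = measure_pmf.prob (Gamma d t c) {p. w \<in> set p}"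

text \<open>Index set of the Gaussian inputs: None for X_0, Some (u,v) for W_{u->v}.\<close>
definition noise_idx :: "nat \<Rightarrow> (pt \<times> pt) option set" where
  "noise_idx d = {None} \<union> Some ` {(u, v). v \<in> Pset d \<and> u \<in> preds d v}"

end

theory Submission imports Defs begin



definition lvl :: "nat \<Rightarrow> pt \<Rightarrow> nat" where "lvl d w = (\<Sum>i\<le>d. w i)"

lemma preds_finite: "finite (preds d v)"
proof -
  have "preds d v = (\<lambda>i. v(i := v i - 1)) ` {i. i \<le> d \<and> 0 < v i}"
    unfolding preds_def by auto
  thus ?thesis by simp
qed

lemma preds_card_le: "card (preds d v) \<le> d + 1"
proof -
  have "preds d v = (\<lambda>i. v(i := v i - 1)) ` {i. i \<le> d \<and> 0 < v i}"
    unfolding preds_def by auto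
  hence "card (preds d v) \<le> card {i. i \<le> d \<and> 0 < v i}" by (simp add: card_image_le)
  also have "\<dots> \<le> card {..d}" by (intro card_mono) auto
  finally show ?thesis by simp
qed

lemma preds_nonempty: "v \<in> Pset d \<Longrightarrow> v \<noteq> (\<lambda>_. 0) \<Longrightarrow> preds d v \<noteq> {}"
proof -
  assume "v \<in> Pset d" "v \<noteq> (\<lambda>_. 0)"
  then obtain i where "v i \<noteq> 0" by auto
  with \<open>v \<in> Pset d\<close> have "i \<le> d" unfolding Pset_def by (metis (mono_tags) mem_Collect_eq leI)
  thus ?thesis using \<open>v i \<noteq> 0\<close> unfolding preds_def by auto
qed

lemma preds_Pset: "y \<in> preds d v \<Longrightarrow> v \<in> Pset d \<Longrightarrow> y \<in> Pset d"
  unfolding preds_def Pset_def by auto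

lemma preds_lvl: "y \<in> preds d v \<Longrightarrow> lvl d y + 1 = lvl d v"
proof -
  assume "y \<in> preds d v"
  then obtain i where i: "i \<le> d" "0 < v i" "y = v(i := v i - 1)" unfolding preds_def by auto
  have "lvl d v = v i + (\<Sum>j\<in>{..d}-{i}. v j)" unfolding lvl_def
    using i by (subst sum.remove[of _ i]) auto
  moreover have "lvl d y = (v i - 1) + (\<Sum>j\<in>{..d}-{i}. v j)" unfolding lvl_def
    using i by (subst sum.remove[of _ i]) auto
  ultimately show ?thesis using i by simp
qed

lemma Lev_alt: "Lev d n = {v \<in> Pset d. lvl d v = n}"
  unfolding Lev_def lvl_def by simp

lemma preds_Lev: "y \<in> preds d v \<Longrightarrow> v \<in> Lev d (Suc n) \<Longrightarrow> y \<in> Lev d n"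
  unfolding Lev_alt using preds_Pset preds_lvl by fastforce

lemma Lev_Suc_nz: "v \<in> Lev d (Suc n) \<Longrightarrow> v \<noteq> (\<lambda>_. 0)"
  unfolding Lev_def by auto

lemma Lev_0: "Lev d 0 = {\<lambda>_. 0}"
  unfolding Lev_def Pset_def by (auto simp: fun_eq_iff) (metis atMost_iff not_le)

lemma Low_finite: "finite {v \<in> Pset d. lvl d v \<le> n}"
proof -
  have "{v \<in> Pset d. lvl d v \<le> n} \<subseteq> {f. \<forall>x. (x \<in> {..d} \<longrightarrow> f x \<in> {..n}) \<and> (x \<notin> {..d} \<longrightarrow> f x = 0)}"
  proof -
    have "v x \<le> n" if "lvl d v \<le> n" "x \<le> d" for v x
    proof -
      have "v x \<le> lvl d v" unfolding lvl_def using that by (intro member_le_sum) auto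
      thus ?thesis using that by simp
    qed
    thus ?thesis unfolding Pset_def by auto
  qed
  moreover have "finite {f. \<forall>x. (x \<in> {..d} \<longrightarrow> f x \<in> {..n}) \<and> (x \<notin> {..d} \<longrightarrow> f x = (0::nat))}"
    by (rule finite_set_of_finite_funs) auto
  ultimately show ?thesis by (rule finite_subset)
qed

lemma Lev_finite: "finite (Lev d n)"
  by (rule finite_subset[OF _ Low_finite[of d n]]) (auto simp: Lev_alt)



lemma walk_support:
  "y \<in> Pset d \<Longrightarrow> p \<in> set_pmf (walk d n y) \<Longrightarrow> z \<in> set p \<Longrightarrow> lvl d z \<le> lvl d y"
proof (induction n arbitrary: y p)
  case 0 thus ?case by simp
next
  case (Suc n)
  show ?case
  proof (cases "y = (\<lambda>_. 0)")
    case True thus ?thesis using Suc by simp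
  next
    case False
    with Suc.prems obtain y' p' where y': "y' \<in> preds d y" "p' \<in> set_pmf (walk d n y')" "p = y # p'"
      using preds_finite[of d y] preds_nonempty[of y d] by auto
    show ?thesis
    proof (cases "z = y")
      case True thus ?thesis by simp
    next
      case False
      hence "z \<in> set p'" using y' Suc.prems by simp
      hence "lvl d z \<le> lvl d y'" using Suc.IH[of y' p'] y' preds_Pset Suc.prems by blast
      thus ?thesis using preds_lvl[OF y'(1)] by simp
    qed
  qed
qed

definition fv :: "nat \<Rightarrow> nat \<Rightarrow> pt \<Rightarrow> pt \<Rightarrow> real" where
  "fv d n u w = measure_pmf.prob (walk d n u) {p. w \<in> set p}"

lemma fv_0: "fv d 0 u w = (if w = u then 1 else 0)"
  unfolding fv_def by simp

lemma measure_bind_pmf: "measure_pmf.prob (bind_pmf M N) A = (\<integral>x. measure_pmf.prob (N x) A \<partial>M)"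
  unfolding measure_pmf_bind
  by (rule measure_pmf.measure_bind[where N="count_space UNIV"]) (auto simp: space_subprob_algebra measure_pmf.subprob_space_axioms)

lemma fv_Suc: "u \<in> Pset d \<Longrightarrow> u \<noteq> (\<lambda>_. 0) \<Longrightarrow>
  fv d (Suc n) u w = (if w = u then 1 else (\<Sum>y\<in>preds d u. fv d n y w) / card (preds d u))"
  using preds_finite[of d u] preds_nonempty[of u d]
  by (auto simp: fv_def measure_bind_pmf integral_pmf_of_set vimage_def)

lemma fv_zero: "y \<in> Pset d \<Longrightarrow> lvl d y < lvl d w \<Longrightarrow> fv d n y w = 0"
  unfolding fv_def measure_pmf_zero_iff using walk_support[of y d _ n w] by fastforce



definition V :: "nat \<Rightarrow> nat \<Rightarrow> (pt \<Rightarrow> real) \<Rightarrow> pt \<Rightarrow> real" where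
  "V d n \<mu> w = (\<Sum>u\<in>Lev d n. \<mu> u * fv d n u w)"

definition stp :: "nat \<Rightarrow> nat \<Rightarrow> (pt \<Rightarrow> real) \<Rightarrow> pt \<Rightarrow> real" where
  "stp d n \<mu> y = (\<Sum>u\<in>Lev d (Suc n). (if y \<in> preds d u then \<mu> u / card (preds d u) else 0))"

lemma swap_lemma:
  fixes g :: "pt \<Rightarrow> pt \<Rightarrow> real"
  shows "(\<Sum>u\<in>Lev d (Suc n). \<Sum>y\<in>preds d u. g u y) =
         (\<Sum>y\<in>Lev d n. \<Sum>u\<in>Lev d (Suc n). if y \<in> preds d u then g u y else 0)"
proof -
  have "(\<Sum>u\<in>Lev d (Suc n). \<Sum>y\<in>preds d u. g u y) =
        (\<Sum>u\<in>Lev d (Suc n). \<Sum>y\<in>Lev d n. if y \<in> preds d u then g u y else 0)"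
  proof (rule sum.cong[OF refl])
    fix u assume u: "u \<in> Lev d (Suc n)"
    have "preds d u \<subseteq> Lev d n" using preds_Lev u by blast
    thus "(\<Sum>y\<in>preds d u. g u y) = (\<Sum>y\<in>Lev d n. if y \<in> preds d u then g u y else 0)"
      using Lev_finite by (simp add: sum.If_cases Int_absorb1 inf_commute)
  qed
  also have "\<dots> = (\<Sum>y\<in>Lev d n. \<Sum>u\<in>Lev d (Suc n). if y \<in> preds d u then g u y else 0)"
    by (rule sum.swap)
  finally show ?thesis .
qed

lemma V_0: "V d 0 \<mu> w = (if w = (\<lambda>_. 0) then \<mu> (\<lambda>_. 0) else 0)"
  unfolding V_def Lev_0 by (simp add: fv_0)

lemma V_Suc: "w \<in> Pset d \<Longrightarrow>
  V d (Suc n) \<mu> w = (if w \<in> Lev d (Suc n) then \<mu> w else V d n (stp d n \<mu>) w)"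
proof -
  assume w: "w \<in> Pset d"
  have uP: "u \<in> Pset d" "u \<noteq> (\<lambda>_. 0)" if "u \<in> Lev d (Suc n)" for u
    using that Lev_Suc_nz unfolding Lev_def by auto
  have V1: "V d (Suc n) \<mu> w = (\<Sum>u\<in>Lev d (Suc n).
      \<mu> u * (if w = u then 1 else (\<Sum>y\<in>preds d u. fv d n y w) / card (preds d u)))"
    unfolding V_def by (rule sum.cong[OF refl]) (simp add: fv_Suc uP)
  show ?thesis
  proof (cases "w \<in> Lev d (Suc n)")
    case True
    have z: "fv d n y w = 0" if "u \<in> Lev d (Suc n)" "y \<in> preds d u" for u y
    proof -
      have "y \<in> Lev d n" using preds_Lev that by blast
      thus ?thesis using True by (intro fv_zero) (auto simp: Lev_alt)
    qed
    have "V d (Suc n) \<mu> w = (\<Sum>u\<in>Lev d (Suc n). if w = u then \<mu> u else 0)"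
      unfolding V1 by (rule sum.cong[OF refl]) (simp add: z)
    also have "\<dots> = \<mu> w" using True Lev_finite by simp
    finally show ?thesis using True by simp
  next
    case False
    have "V d (Suc n) \<mu> w = (\<Sum>u\<in>Lev d (Suc n). \<Sum>y\<in>preds d u. \<mu> u / card (preds d u) * fv d n y w)"
      unfolding V1 using False
      by (intro sum.cong refl) (auto simp: sum_distrib_left sum_divide_distrib)
    also have "\<dots> = (\<Sum>y\<in>Lev d n. \<Sum>u\<in>Lev d (Suc n).
        if y \<in> preds d u then \<mu> u / card (preds d u) * fv d n y w else 0)"
      by (rule swap_lemma)
    also have "\<dots> = V d n (stp d n \<mu>) w"
      unfolding V_def stp_def by (intro sum.cong refl) (auto simp: sum_distrib_right intro!: sum.cong)
    finally show ?thesis using False by simp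
  qed
qed

lemma V_zero: "w \<in> Pset d \<Longrightarrow> n < lvl d w \<Longrightarrow> V d n \<mu> w = 0"
  unfolding V_def by (intro sum.neutral) (auto simp: Lev_alt fv_zero)

definition Low :: "nat \<Rightarrow> nat \<Rightarrow> pt set" where "Low d n = {v \<in> Pset d. lvl d v \<le> n}"

definition SV :: "nat \<Rightarrow> nat \<Rightarrow> (pt \<Rightarrow> real) \<Rightarrow> real" where
  "SV d n \<mu> = (\<Sum>w\<in>Low d n. (V d n \<mu> w)\<^sup>2)"

lemma SV_0: "SV d 0 \<mu> = (\<mu> (\<lambda>_. 0))\<^sup>2"
proof -
  have "Low d 0 = Lev d 0" unfolding Low_def Lev_alt by auto
  thus ?thesis unfolding SV_def Lev_0 by (simp add: V_0)
qed

lemma SV_Suc: "SV d (Suc n) \<mu> = (\<Sum>u\<in>Lev d (Suc n). (\<mu> u)\<^sup>2) + SV d n (stp d n \<mu>)"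
proof -
  have U: "Low d (Suc n) = Lev d (Suc n) \<union> Low d n" "Lev d (Suc n) \<inter> Low d n = {}"
    unfolding Low_def Lev_alt by auto
  have f: "finite (Low d n)" unfolding Low_def by (rule Low_finite)
  have "SV d (Suc n) \<mu> = (\<Sum>w\<in>Lev d (Suc n). (V d (Suc n) \<mu> w)\<^sup>2) + (\<Sum>w\<in>Low d n. (V d (Suc n) \<mu> w)\<^sup>2)"
    unfolding SV_def U(1) using U(2) f Lev_finite by (simp add: sum.union_disjoint)
  also have "(\<Sum>w\<in>Lev d (Suc n). (V d (Suc n) \<mu> w)\<^sup>2) = (\<Sum>u\<in>Lev d (Suc n). (\<mu> u)\<^sup>2)"
    by (rule sum.cong[OF refl]) (auto simp: V_Suc Lev_def)
  also have "(\<Sum>w\<in>Low d n. (V d (Suc n) \<mu> w)\<^sup>2) = SV d n (stp d n \<mu>)"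
    unfolding SV_def by (rule sum.cong[OF refl]) (auto simp: V_Suc Low_def Lev_alt)
  finally show ?thesis .
qed



lemma std_normal_facts:
  assumes P: "prob_space M" and D: "distributed M lborel Y std_normal_density"
  shows "integrable M Y" "integral\<^sup>L M Y = 0"
    "integrable M (\<lambda>x. Y x * Y x)" "integral\<^sup>L M (\<lambda>x. Y x * Y x) = 1"
proof -
  interpret prob_space M by (rule P)
  have nn: "\<And>x. 0 \<le> std_normal_density x" by (simp add: normal_density_nonneg)
  show "integrable M Y"
    using distributed_integrable[OF D, of "\<lambda>x. x"] nn integrable_std_normal_moment[of 1] by simp
  show "integral\<^sup>L M Y = 0" by (rule standard_normal_distributed_expectation[OF D])
  have i2: "integrable lborel (\<lambda>x. std_normal_density x * x^2)" by (rule integrable_std_normal_moment)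
  have "integrable M (\<lambda>x. (Y x)^2)"
    using distributed_integrable[OF D, of "\<lambda>x. x^2"] nn i2 by simp
  thus "integrable M (\<lambda>x. Y x * Y x)" by (simp add: power2_eq_square)
  have "integral\<^sup>L lborel (\<lambda>x. std_normal_density x * x^(2*1)) = 1"
    by (subst integral_std_normal_moment_even) (simp add: fact_numeral)
  hence "integral\<^sup>L M (\<lambda>x. (Y x)^2) = 1"
    using distributed_integral[OF D, of "\<lambda>x. x^2"] nn by simp
  thus "integral\<^sup>L M (\<lambda>x. Y x * Y x) = 1" by (simp add: power2_eq_square)
qed

lemma cross_facts:
  assumes P: "prob_space M" and indep: "prob_space.indep_vars M (\<lambda>_. borel) G I"
    and gauss: "\<And>i. i \<in> I \<Longrightarrow> distributed M lborel (G i) std_normal_density"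
    and ij: "i \<in> I" "j \<in> I"
  shows "integrable M (\<lambda>x. G i x * G j x)"
        "integral\<^sup>L M (\<lambda>x. G i x * G j x) = (if i = j then 1 else 0)"
proof -
  interpret prob_space M by (rule P)
  show "integrable M (\<lambda>x. G i x * G j x)"
  proof (cases "i = j")
    case True thus ?thesis using std_normal_facts[OF P gauss[OF ij(1)]] by simp
  next
    case False
    have ind: "indep_vars (\<lambda>_. borel) G {i, j}" by (rule indep_vars_subset[OF indep]) (use ij in auto)
    have "integrable M (\<lambda>\<omega>. \<Prod>k\<in>{i,j}. G k \<omega>)"
      by (rule indep_vars_integrable[OF _ ind]) (use std_normal_facts[OF P gauss] ij in auto)
    thus ?thesis using False by simp
  qed
  show "integral\<^sup>L M (\<lambda>x. G i x * G j x) = (if i = j then 1 else 0)"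
  proof (cases "i = j")
    case True thus ?thesis using std_normal_facts[OF P gauss[OF ij(1)]] by simp
  next
    case False
    have ind: "indep_vars (\<lambda>_. borel) G {i, j}" by (rule indep_vars_subset[OF indep]) (use ij in auto)
    have "integral\<^sup>L M (\<lambda>\<omega>. \<Prod>k\<in>{i,j}. G k \<omega>) = (\<Prod>k\<in>{i,j}. integral\<^sup>L M (G k))"
      by (rule indep_vars_lebesgue_integral[OF _ ind]) (use std_normal_facts[OF P gauss] ij in auto)
    thus ?thesis using False std_normal_facts[OF P gauss] ij by simp
  qed
qed

lemma lincomb_variance:
  assumes P: "prob_space M" and indep: "prob_space.indep_vars M (\<lambda>_. borel) G I"
    and gauss: "\<And>i. i \<in> I \<Longrightarrow> distributed M lborel (G i) std_normal_density"
    and S: "finite S" "S \<subseteq> I"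
    and f: "\<And>\<omega>. \<omega> \<in> space M \<Longrightarrow> f \<omega> = (\<Sum>i\<in>S. a i * G i \<omega>)"
  shows "prob_space.variance M f = (\<Sum>i\<in>S. (a i)\<^sup>2)"
proof -
  interpret prob_space M by (rule P)
  have g: "\<And>i. i \<in> S \<Longrightarrow> distributed M lborel (G i) std_normal_density" using gauss S by auto
  have Ef: "expectation f = expectation (\<lambda>\<omega>. \<Sum>i\<in>S. a i * G i \<omega>)"
    by (rule Bochner_Integration.integral_cong) (auto simp: f)
  also have "\<dots> = (\<Sum>i\<in>S. a i * expectation (G i))"
    by (subst Bochner_Integration.integral_sum) (auto intro!: std_normal_facts[OF P] g)
  also have "\<dots> = 0" using std_normal_facts[OF P g] by simp
  finally have E0: "expectation f = 0" .
  have int: "\<And>i j. i \<in> S \<Longrightarrow> j \<in> S \<Longrightarrow> integrable M (\<lambda>x. G i x * G j x)"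
    using cross_facts(1)[OF P indep gauss] S by auto
  have "variance f = expectation (\<lambda>\<omega>. \<Sum>i\<in>S. \<Sum>j\<in>S. a i * a j * (G i \<omega> * G j \<omega>))"
    unfolding E0
    by (rule Bochner_Integration.integral_cong)
       (auto simp: f power2_eq_square sum_distrib_left sum_distrib_right ac_simps)
  also have "\<dots> = (\<Sum>i\<in>S. \<Sum>j\<in>S. a i * a j * expectation (\<lambda>\<omega>. G i \<omega> * G j \<omega>))"
    by (simp add: Bochner_Integration.integral_sum int)
  also have "\<dots> = (\<Sum>i\<in>S. \<Sum>j\<in>S. a i * a j * (if i = j then 1 else 0))"
  proof (intro sum.cong refl)
    fix i j assume "i \<in> S" "j \<in> S"
    hence "i \<in> I" "j \<in> I" using S by auto
    thus "a i * a j * expectation (\<lambda>\<omega>. G i \<omega> * G j \<omega>) = a i * a j * (if i = j then 1 else 0)"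
      using cross_facts(2)[OF P indep gauss] by simp
  qed
  also have "\<dots> = (\<Sum>i\<in>S. (a i)\<^sup>2)"
    using S by (simp add: power2_eq_square if_distrib cong: if_cong)
  finally show ?thesis .
qed



definition LowE :: "nat \<Rightarrow> nat \<Rightarrow> (pt \<times> pt) option set" where
  "LowE d n = {None} \<union> Some ` {(y, u). lvl d u \<le> n}"

lemma rep:
  fixes M :: "'a measure" and G :: "(pt \<times> pt) option \<Rightarrow> 'a \<Rightarrow> real" and X :: "pt \<Rightarrow> 'a \<Rightarrow> real"
  assumes X0: "\<And>\<omega>. \<omega> \<in> space M \<Longrightarrow> X (\<lambda>_. 0) \<omega> = G None \<omega>"
    and Xrec: "\<And>v \<omega>. v \<in> Pset d \<Longrightarrow> v \<noteq> (\<lambda>_. 0) \<Longrightarrow> \<omega> \<in> space M \<Longrightarrow>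
        X v \<omega> = (1 / real (card (preds d v))) *
                  (\<Sum>u\<in>preds d v. X u \<omega> + G (Some (u, v)) \<omega>)"
  shows "\<exists>S a. finite S \<and> S \<subseteq> noise_idx d \<and> S \<subseteq> LowE d n \<and>
     (\<forall>\<omega>\<in>space M. (\<Sum>u\<in>Lev d n. \<mu> u * X u \<omega>) = (\<Sum>i\<in>S. a i * G i \<omega>)) \<and>
     SV d n \<mu> \<le> real (d + 1) * (\<Sum>i\<in>S. (a i)\<^sup>2)"
proof (induction n arbitrary: \<mu>)
  case 0
  show ?case
  proof (intro exI conjI ballI)
    show "finite {None}" by simp
    show "{None} \<subseteq> noise_idx d" by (simp add: noise_idx_def)
    show "{None} \<subseteq> LowE d 0" by (simp add: LowE_def)
    fix \<omega> assume "\<omega> \<in> space M"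
    thus "(\<Sum>u\<in>Lev d 0. \<mu> u * X u \<omega>) = (\<Sum>i\<in>{None}. (\<lambda>_. \<mu> (\<lambda>_. 0)) i * G i \<omega>)"
      by (simp add: Lev_0 X0)
  next
    show "SV d 0 \<mu> \<le> real (d + 1) * (\<Sum>i\<in>{None}. ((\<lambda>_. \<mu> (\<lambda>_. 0)) i)\<^sup>2)"
      using mult_right_mono[of 1 "1 + real d" "(\<mu> (\<lambda>_. 0))\<^sup>2"] by (simp add: SV_0)
  qed
next
  case (Suc n)
  obtain S' a' where S': "finite S'" "S' \<subseteq> noise_idx d" "S' \<subseteq> LowE d n"
    "\<forall>\<omega>\<in>space M. (\<Sum>u\<in>Lev d n. stp d n \<mu> u * X u \<omega>) = (\<Sum>i\<in>S'. a' i * G i \<omega>)"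
    "SV d n (stp d n \<mu>) \<le> real (d + 1) * (\<Sum>i\<in>S'. (a' i)\<^sup>2)"
    using Suc.IH[of "stp d n \<mu>"] by blast
  define k where "k u = real (card (preds d u))" for u
  define Sg where "Sg = (SIGMA u:Lev d (Suc n). preds d u)"
  define h where "h = (\<lambda>(u::pt, y::pt). Some (y, u))"
  define E where "E = h ` Sg"
  define b where "b (i::(pt \<times> pt) option) = (case i of None \<Rightarrow> 0 | Some yu \<Rightarrow> \<mu> (snd yu) / k (snd yu))" for i
  define a where "a i = (if i \<in> E then b i else a' i)" for i
  have fSg: "finite Sg" unfolding Sg_def using Lev_finite preds_finite by blast
  have injh: "inj_on h Sg" unfolding h_def inj_on_def by auto
  have fE: "finite E" unfolding E_def using fSg by simp
  have lvlE: "lvl d u = Suc n" if "Some (y, u) \<in> E" for y u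
    using that unfolding E_def h_def Sg_def by (auto simp: Lev_alt)
  have disj: "E \<inter> S' = {}"
  proof -
    { fix i assume i: "i \<in> E" "i \<in> S'"
      then obtain y u where "i = Some (y, u)" unfolding E_def h_def by auto
      moreover have "lvl d u \<le> n" using i S'(3) \<open>i = Some (y, u)\<close> unfolding LowE_def by auto
      ultimately have False using lvlE i by fastforce }
    thus ?thesis by blast
  qed
  have disj': "S' \<inter> E = {}" using disj by blast
  have EN: "E \<subseteq> noise_idx d" unfolding E_def h_def Sg_def noise_idx_def by (auto simp: Lev_def)
  have EL: "E \<subseteq> LowE d (Suc n)" unfolding E_def h_def Sg_def LowE_def by (auto simp: Lev_alt)
  have S'L: "S' \<subseteq> LowE d (Suc n)" using S'(3) unfolding LowE_def by auto
  have uP: "u \<in> Pset d" "u \<noteq> (\<lambda>_. 0)" "k u \<ge> 1" "k u \<le> real (d + 1)" if "u \<in> Lev d (Suc n)" for u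
  proof -
    show "u \<in> Pset d" using that by (simp add: Lev_def)
    show "u \<noteq> (\<lambda>_. 0)" using Lev_Suc_nz that by blast
    thus "k u \<ge> 1" unfolding k_def using preds_nonempty[of u d] preds_finite[of d u] \<open>u \<in> Pset d\<close>
      by (simp add: Suc_leI card_gt_0_iff)
    show "k u \<le> real (d + 1)" unfolding k_def using preds_card_le[of d u] by linarith
  qed
  have sumE: "(\<Sum>i\<in>E. f i) = (\<Sum>u\<in>Lev d (Suc n). \<Sum>y\<in>preds d u. f (Some (y, u)))" for f :: "_ \<Rightarrow> real"
  proof -
    have "(\<Sum>i\<in>E. f i) = (\<Sum>p\<in>Sg. f (h p))" unfolding E_def by (rule sum.reindex[OF injh, unfolded comp_def])
    also have "\<dots> = (\<Sum>u\<in>Lev d (Suc n). \<Sum>y\<in>preds d u. f (Some (y, u)))"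
      unfolding Sg_def h_def using Lev_finite preds_finite by (subst sum.Sigma) (auto intro!: sum.cong split: prod.splits)
    finally show ?thesis .
  qed
  show ?case
  proof (intro exI conjI ballI)
    show "finite (S' \<union> E)" using S'(1) fE by simp
    show "S' \<union> E \<subseteq> noise_idx d" using S'(2) EN by simp
    show "S' \<union> E \<subseteq> LowE d (Suc n)" using S'L EL by simp
    fix \<omega> assume \<omega>: "\<omega> \<in> space M"
    have "(\<Sum>u\<in>Lev d (Suc n). \<mu> u * X u \<omega>) =
        (\<Sum>u\<in>Lev d (Suc n). \<Sum>y\<in>preds d u. \<mu> u / k u * X y \<omega>) +
        (\<Sum>u\<in>Lev d (Suc n). \<Sum>y\<in>preds d u. \<mu> u / k u * G (Some (y, u)) \<omega>)"
      unfolding sum.distrib[symmetric]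
      by (intro sum.cong refl) (simp add: Xrec[OF uP(1,2) \<omega>] k_def sum_distrib_left sum.distrib
              algebra_simps)
    also have "(\<Sum>u\<in>Lev d (Suc n). \<Sum>y\<in>preds d u. \<mu> u / k u * X y \<omega>) =
        (\<Sum>y\<in>Lev d n. stp d n \<mu> y * X y \<omega>)"
      unfolding swap_lemma stp_def k_def by (intro sum.cong refl) (auto simp: sum_distrib_right intro!: sum.cong)
    also have "\<dots> = (\<Sum>i\<in>S'. a' i * G i \<omega>)" using S'(4) \<omega> by blast
    also have "\<dots> = (\<Sum>i\<in>S'. a i * G i \<omega>)" unfolding a_def using disj by (intro sum.cong refl) auto
    also have "(\<Sum>u\<in>Lev d (Suc n). \<Sum>y\<in>preds d u. \<mu> u / k u * G (Some (y, u)) \<omega>) =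
        (\<Sum>i\<in>E. a i * G i \<omega>)"
      unfolding sumE by (intro sum.cong refl) (auto simp: a_def b_def E_def h_def Sg_def)
    finally show "(\<Sum>u\<in>Lev d (Suc n). \<mu> u * X u \<omega>) = (\<Sum>i\<in>S' \<union> E. a i * G i \<omega>)"
      using S'(1) fE disj' by (simp add: sum.union_disjoint)
  next
    have "(\<Sum>i\<in>E. (a i)\<^sup>2) = (\<Sum>u\<in>Lev d (Suc n). \<Sum>y\<in>preds d u. (\<mu> u / k u)\<^sup>2)"
      unfolding sumE by (intro sum.cong refl) (auto simp: a_def b_def E_def h_def Sg_def)
    also have "\<dots> = (\<Sum>u\<in>Lev d (Suc n). k u * (\<mu> u / k u)\<^sup>2)"
      by (simp add: k_def)
    finally have e1: "(\<Sum>i\<in>E. (a i)\<^sup>2) = (\<Sum>u\<in>Lev d (Suc n). k u * (\<mu> u / k u)\<^sup>2)" .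
    have e2: "(\<Sum>u\<in>Lev d (Suc n). (\<mu> u)\<^sup>2) \<le> real (d + 1) * (\<Sum>u\<in>Lev d (Suc n). k u * (\<mu> u / k u)\<^sup>2)"
      unfolding sum_distrib_left
    proof (rule sum_mono)
      fix u assume u: "u \<in> Lev d (Suc n)"
      have "k u * (\<mu> u / k u)\<^sup>2 = (\<mu> u)\<^sup>2 / k u" using uP(3)[OF u] by (simp add: power2_eq_square)
      moreover have "(\<mu> u)\<^sup>2 \<le> real (d + 1) * ((\<mu> u)\<^sup>2 / k u)"
      proof -
        have "k u * (\<mu> u)\<^sup>2 \<le> real (d + 1) * (\<mu> u)\<^sup>2"
          using uP(4)[OF u] by (intro mult_right_mono) auto
        thus ?thesis using uP(3)[OF u] by (simp add: field_simps)
      qed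
      ultimately show "(\<mu> u)\<^sup>2 \<le> real (d + 1) * (k u * (\<mu> u / k u)\<^sup>2)" by simp
    qed
    have e3: "(\<Sum>i\<in>S'. (a i)\<^sup>2) = (\<Sum>i\<in>S'. (a' i)\<^sup>2)" unfolding a_def using disj by (intro sum.cong refl) auto
    show "SV d (Suc n) \<mu> \<le> real (d + 1) * (\<Sum>i\<in>S' \<union> E. (a i)\<^sup>2)"
      using S'(1,5) fE disj' e1 e2 e3 by (simp add: sum.union_disjoint SV_Suc distrib_left)
  qed
qed



theorem mainTheorem14:
  fixes M :: "'a measure" and d t :: nat
    and G :: "(pt \<times> pt) option \<Rightarrow> 'a \<Rightarrow> real"
    and X :: "pt \<Rightarrow> 'a \<Rightarrow> real"
    and c :: "pt \<Rightarrow> real"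
  assumes "prob_space M"
    and indep: "prob_space.indep_vars M (\<lambda>_. borel) G (noise_idx d)"
    and gauss: "\<And>i. i \<in> noise_idx d \<Longrightarrow> distributed M lborel (G i) std_normal_density"
    and X0: "\<And>\<omega>. \<omega> \<in> space M \<Longrightarrow> X (\<lambda>_. 0) \<omega> = G None \<omega>"
    and Xrec: "\<And>v \<omega>. v \<in> Pset d \<Longrightarrow> v \<noteq> (\<lambda>_. 0) \<Longrightarrow> \<omega> \<in> space M \<Longrightarrow>
        X v \<omega> = (1 / real (card (preds d v))) *
                  (\<Sum>u\<in>preds d v. X u \<omega> + G (Some (u, v)) \<omega>)"
    and c_nonneg: "\<And>u. u \<in> Lev d t \<Longrightarrow> c u \<ge> 0"
    and c_sum: "(\<Sum>u\<in>Lev d t. c u) = 1"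
  shows "prob_space.variance M (\<lambda>\<omega>. \<Sum>u\<in>Lev d t. c u * X u \<omega>)
           \<ge> 1 / real (d + 1) * (\<Sum>\<^sub>\<infinity>w\<in>Pset d. (visit_prob d t c w)\<^sup>2)"
proof -
  define f where "f = (\<lambda>u. if u \<in> Lev d t then c u else 0)"
  have fnn: "\<And>x. 0 \<le> f x" unfolding f_def using c_nonneg by auto
  have fint: "(\<integral>\<^sup>+x. ennreal (f x) \<partial>count_space UNIV) = 1"
  proof -
    have "(\<integral>\<^sup>+x. ennreal (f x) \<partial>count_space UNIV) = (\<Sum>x\<in>Lev d t. ennreal (f x))"
      by (rule nn_integral_count_space') (auto simp: f_def Lev_finite)
    also have "\<dots> = ennreal (\<Sum>x\<in>Lev d t. f x)" using fnn by simp
    also have "(\<Sum>x\<in>Lev d t. f x) = 1" unfolding f_def using c_sum by simp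
    finally show ?thesis by simp
  qed
  have pmfE: "pmf (embed_pmf f) u = f u" for u by (rule pmf_embed_pmf[OF fnn fint])
  have setE: "set_pmf (embed_pmf f) \<subseteq> Lev d t"
    using set_embed_pmf[OF fnn fint] unfolding f_def by auto
  have vp: "visit_prob d t c w = V d t c w" for w
  proof -
    have "visit_prob d t c w = (\<integral>u. fv d t u w \<partial>measure_pmf (embed_pmf f))"
      unfolding visit_prob_def Gamma_def f_def[symmetric] measure_bind_pmf fv_def ..
    also have "\<dots> = (\<Sum>u\<in>Lev d t. pmf (embed_pmf f) u *\<^sub>R fv d t u w)"
      by (rule integral_measure_pmf[OF Lev_finite]) (use setE in auto)
    also have "\<dots> = V d t c w" unfolding V_def pmfE by (intro sum.cong refl) (simp add: f_def)
    finally show ?thesis .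
  qed
  have inf: "(\<Sum>\<^sub>\<infinity>w\<in>Pset d. (visit_prob d t c w)\<^sup>2) = SV d t c"
  proof -
    have "(\<Sum>\<^sub>\<infinity>w\<in>Pset d. (visit_prob d t c w)\<^sup>2) = (\<Sum>\<^sub>\<infinity>w\<in>Low d t. (V d t c w)\<^sup>2)"
      by (rule infsum_cong_neutral) (auto simp: vp Low_def V_zero)
    also have "\<dots> = SV d t c" unfolding SV_def
      by (rule infsum_finite) (simp add: Low_def Low_finite)
    finally show ?thesis .
  qed
  obtain S a where Sa: "finite S" "S \<subseteq> noise_idx d"
     "\<forall>\<omega>\<in>space M. (\<Sum>u\<in>Lev d t. c u * X u \<omega>) = (\<Sum>i\<in>S. a i * G i \<omega>)"
     "SV d t c \<le> real (d + 1) * (\<Sum>i\<in>S. (a i)\<^sup>2)"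
    using rep[of M X G d t c, OF X0 Xrec] by blast
  have var: "prob_space.variance M (\<lambda>\<omega>. \<Sum>u\<in>Lev d t. c u * X u \<omega>) = (\<Sum>i\<in>S. (a i)\<^sup>2)"
    by (rule lincomb_variance[OF assms(1) indep gauss Sa(1,2)]) (use Sa(3) in auto)
  show ?thesis unfolding var inf using Sa(4) by (simp add: field_simps)
qed

end
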